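(* Let $G=(V,E)$ be a finite, undirected, unweighted, connected graph with $n=|V|$ and let $S$ be its supergraph. The 2-Opt procedure on $S$ (described in the context) runs in time $O(n^4)$ when it searches for a Hamiltonian cycle of $S$ or for a Hamiltonian path of $S$ with a fixed starting vertex, and in time $O(n^5)$ when it searches for a Hamiltonian path of $S$ (trying every starting vertex).
   Context: $\mathrm{dist}(u,v)$ is the shortest-path distance in $G$; the supergraph $S$ is the complete weighted graph on $V=\{v_1,\dots,v_n\}$ with weights $w(u,v)=\mathrm{dist}(u,v)$. 2-Opt for cycles: start with the Hamiltonian cycle $(v_1,v_2,\dots,v_n,v_1)$, stored as a doubly linked list of edges. Repeat: scan pairs of cycle edges $(c_k,c_{k+1}),(c_j,c_{j+1})$ with $k<j$ in the current cyclic order $(c_1,\dots,c_n)$; at the first pair with $w(c_k,c_{k+1})+w(c_j,c_{j+1})>w(c_k,c_j)+w(c_{k+1},c_{j+1})$, replace these two edges by $(c_k,c_j)$ and $(c_{k+1},c_{j+1})$, reversing the segment between them, and restart the scan; stop when a full scan finds no such pair. 2-Opt for paths with fixed starting vertex $s$: the same procedure applied to the Hamiltonian path starting at $s$ followed by the remaining vertices in index order; for paths without fixed start, the fixed-start procedure is run for every starting vertex. Cost model (as assumed by the paper): initialization costs $O(n)$, and each weight comparison and each edge replacement/segment reversal in the linked list costs $O(1)$. *)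

theory Defs
  imports Main
begin

text \<open>Graph G: vertex set {0..<n} (vertex v_(i+1) is i), undirected edge relation E.\<close>

definition graph_ok :: "nat \<Rightarrow> (nat \<Rightarrow> nat \<Rightarrow> bool) \<Rightarrow> bool" where
  "graph_ok n E \<longleftrightarrow> (\<forall>u v. E u v \<longrightarrow> u < n \<and> v < n) \<and> (\<forall>u v. E u v \<longrightarrow> E v u)"

definition connected :: "nat \<Rightarrow> (nat \<Rightarrow> nat \<Rightarrow> bool) \<Rightarrow> bool" where
  "connected n E \<longleftrightarrow> (\<forall>u<n. \<forall>v<n. \<exists>k. (E ^^ k) u v)"

definition dist :: "(nat \<Rightarrow> nat \<Rightarrow> bool) \<Rightarrow> nat \<Rightarrow> nat \<Rightarrow> nat" where
  "dist E u v = (LEAST k. (E ^^ k) u v)"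

text \<open>Pairs of edge positions (0-indexed) scanned, in scan order. For cycles the edge at
  position j joins xs!j and xs!((j+1) mod n); for paths only positions j < n-1 are edges.\<close>
definition scan_pairs :: "bool \<Rightarrow> nat \<Rightarrow> (nat \<times> nat) list" where
  "scan_pairs cyc n = [(i, j). i \<leftarrow> [0..<n], j \<leftarrow> [Suc i..<(if cyc then n else n - 1)]]"

definition nxt :: "nat list \<Rightarrow> nat \<Rightarrow> nat" where
  "nxt xs j = xs ! (Suc j mod length xs)"

definition improving :: "(nat \<Rightarrow> nat \<Rightarrow> nat) \<Rightarrow> nat list \<Rightarrow> nat \<times> nat \<Rightarrow> bool" where
  "improving w xs p = (case p of (i, j) \<Rightarrow>
     w (xs ! i) (xs ! Suc i) + w (xs ! j) (nxt xs j) > w (xs ! i) (xs ! j) + w (xs ! Suc i) (nxt xs j))"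

text \<open>Replace edges (c_k,c_{k+1}),(c_j,c_{j+1}) by (c_k,c_j),(c_{k+1},c_{j+1}): reverse the segment.\<close>
definition two_opt_swap :: "nat list \<Rightarrow> nat \<times> nat \<Rightarrow> nat list" where
  "two_opt_swap xs p = (case p of (i, j) \<Rightarrow>
     take (Suc i) xs @ rev (drop (Suc i) (take (Suc j) xs)) @ drop (Suc j) xs)"

text \<open>two_opt_cost w cyc xs c: starting from tour/path xs, the 2-Opt procedure terminates,
  performing in total c unit-cost operations (weight comparisons plus edge replacements).\<close>
inductive two_opt_cost :: "(nat \<Rightarrow> nat \<Rightarrow> nat) \<Rightarrow> bool \<Rightarrow> nat list \<Rightarrow> nat \<Rightarrow> bool" where
  stop: "\<not> (\<exists>p \<in> set (scan_pairs cyc (length xs)). improving w xs p)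
         \<Longrightarrow> two_opt_cost w cyc xs (length (scan_pairs cyc (length xs)))"
| step: "\<lbrakk> ps = scan_pairs cyc (length xs); m < length ps; improving w xs (ps ! m);
           \<forall>m' < m. \<not> improving w xs (ps ! m');
           two_opt_cost w cyc (two_opt_swap xs (ps ! m)) c \<rbrakk>
         \<Longrightarrow> two_opt_cost w cyc xs (Suc m + 1 + c)"

definition init_cycle :: "nat \<Rightarrow> nat list" where
  "init_cycle n = [0..<n]"

definition init_path :: "nat \<Rightarrow> nat \<Rightarrow> nat list" where
  "init_path n s = s # filter (\<lambda>v. v \<noteq> s) [0..<n]"

end

theory Submission
  imports Defs "HOL-Library.Transitive_Closure_Table"
begin

fun pw :: "(nat \<Rightarrow> nat \<Rightarrow> nat) \<Rightarrow> nat list \<Rightarrow> nat" where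
  "pw w (a # b # xs) = w a b + pw w (b # xs)"
| "pw w _ = 0"

definition tw :: "(nat \<Rightarrow> nat \<Rightarrow> nat) \<Rightarrow> bool \<Rightarrow> nat list \<Rightarrow> nat" where
  "tw w cyc xs = pw w xs + (if cyc \<and> xs \<noteq> [] then w (last xs) (hd xs) else 0)"

lemma pw_Cons: "pw w (a # xs) = (if xs = [] then 0 else w a (hd xs) + pw w xs)"
  by (cases xs) auto

lemma pw_append: "pw w (xs @ ys) = pw w xs + pw w ys + (if xs \<noteq> [] \<and> ys \<noteq> [] then w (last xs) (hd ys) else 0)"
  by (induction xs) (auto simp: pw_Cons)

lemma pw_rev: assumes "\<forall>a b. w a b = w b a" shows "pw w (rev xs) = pw w xs"
  by (induction xs) (auto simp: pw_append pw_Cons hd_rev last_rev assms)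

lemma pw_bound: "set xs \<subseteq> {..<n} \<Longrightarrow> \<forall>a b. a < n \<longrightarrow> b < n \<longrightarrow> w a b \<le> D \<Longrightarrow> pw w xs \<le> length xs * D"
proof (induction xs)
  case (Cons a xs)
  have "pw w (a # xs) \<le> D + pw w xs" using Cons.prems by (cases xs) (auto simp: pw_Cons)
  then show ?case using Cons by simp
qed simp

lemma scan_mem: "(i, j) \<in> set (scan_pairs cyc n) \<Longrightarrow> i < j \<and> j < n \<and> (cyc \<or> Suc j < n)"
  by (auto simp: scan_pairs_def split: if_splits)

lemma scan_len: "length (scan_pairs cyc n) \<le> n * n"
proof -
  have "length (scan_pairs cyc n) = sum_list (map (\<lambda>i. (if cyc then n else n - 1) - Suc i) [0..<n])"
    by (simp add: scan_pairs_def length_concat comp_def)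
  also have "\<dots> = (\<Sum>i\<in>{0..<n}. (if cyc then n else n - 1) - Suc i)"
    by (simp only: interv_sum_list_conv_sum_set_nat set_upt)
  also have "\<dots> \<le> (\<Sum>i\<in>{0..<n}. n)" by (rule sum_mono) auto
  finally show ?thesis by simp
qed

lemma swap_props:
  assumes "i < j" "j < length xs"
  shows "length (two_opt_swap xs (i, j)) = length xs" "set (two_opt_swap xs (i, j)) \<subseteq> set xs"
  using assms by (auto simp: two_opt_swap_def dest: in_set_takeD in_set_dropD)

lemma swap_dec:
  assumes sym: "\<forall>a b. w a b = w b a" and ij: "i < j" "j < length xs" and cj: "cyc \<or> Suc j < length xs"
    and imp: "improving w xs (i, j)"
  shows "tw w cyc (two_opt_swap xs (i, j)) < tw w cyc xs"
proof -
  define A where "A = take (Suc i) xs"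
  define B where "B = drop (Suc i) (take (Suc j) xs)"
  define C where "C = drop (Suc j) xs"
  have xs: "xs = A @ B @ C"
  proof -
    have "take (Suc j) xs = take (Suc i) (take (Suc j) xs) @ B" unfolding B_def by (rule append_take_drop_id[symmetric])
    also have "take (Suc i) (take (Suc j) xs) = A" using ij by (simp add: A_def min_def)
    finally show ?thesis by (metis C_def append_assoc append_take_drop_id)
  qed
  have sw: "two_opt_swap xs (i, j) = A @ rev B @ C" by (simp add: two_opt_swap_def A_def B_def C_def)
  have xne: "xs \<noteq> []" using ij by auto
  have An1: "A \<noteq> []" using xne by (simp add: A_def)
  have An2: "last A = xs ! i" using ij An1 by (simp add: A_def last_conv_nth)
  have An3: "hd A = xs ! 0" using xne by (simp add: A_def hd_conv_nth)
  note An = An1 An2 An3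
  have Bn: "B \<noteq> []" "hd B = xs ! Suc i" "last B = xs ! j" using ij
    by (auto simp: B_def hd_drop_conv_nth last_drop last_conv_nth nth_take)
  have Cn: "C \<noteq> [] \<Longrightarrow> hd C = xs ! Suc j" using ij by (auto simp: C_def hd_drop_conv_nth)
  have nx: "nxt xs j = (if C = [] then hd A else hd C)"
  proof (cases "C = []")
    case True
    then have "Suc j = length xs" using ij by (simp add: C_def)
    then show ?thesis using True An by (simp add: nxt_def)
  next
    case False
    then have "Suc j < length xs" using ij by (simp add: C_def)
    then show ?thesis using False Cn by (simp add: nxt_def)
  qed
  have pr: "pw w (rev B) = pw w B" by (rule pw_rev[OF sym])
  have lastC: "C \<noteq> [] \<Longrightarrow> last (A @ B @ C) = last C" "C \<noteq> [] \<Longrightarrow> last (A @ rev B @ C) = last C"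
    by auto
  show ?thesis
  proof (cases "C = []")
    case True
    then have "\<not> Suc j < length xs" by (simp add: C_def)
    with cj have cyc by auto
    then show ?thesis using imp True An Bn nx pr
      apply (subst (2) xs, subst sw)
      by (auto simp: tw_def pw_append improving_def last_rev hd_rev sym)
  next
    case False
    then show ?thesis using imp An Bn nx pr lastC
      apply (subst (2) xs, subst sw)
      by (auto simp: tw_def pw_append improving_def last_rev hd_rev sym)
  qed
qed

lemma cost_exists:
  assumes sym: "\<forall>a b. w a b = w b a"
  shows "length xs = n \<Longrightarrow> \<exists>c. two_opt_cost w cyc xs c \<and>
           c \<le> (tw w cyc xs + 1) * (length (scan_pairs cyc n) + 2)"
proof (induction "tw w cyc xs" arbitrary: xs rule: less_induct)
  case less
  define ps where "ps = scan_pairs cyc (length xs)"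
  define L where "L = length (scan_pairs cyc n)"
  have Lps: "length ps = L" using less.prems by (simp add: ps_def L_def)
  show ?case
  proof (cases "\<exists>p \<in> set ps. improving w xs p")
    case False
    then have "two_opt_cost w cyc xs (length ps)" unfolding ps_def by (rule two_opt_cost.stop)
    then show ?thesis using Lps L_def by force
  next
    case True
    then obtain m0 where m0: "m0 < length ps" "improving w xs (ps ! m0)" by (auto simp: in_set_conv_nth)
    define m where "m = (LEAST m. m < length ps \<and> improving w xs (ps ! m))"
    have mP: "m < length ps \<and> improving w xs (ps ! m)" unfolding m_def
      by (rule LeastI[of _ m0]) (use m0 in auto)
    have mL: "\<forall>m' < m. \<not> improving w xs (ps ! m')"
    proof (intro allI impI)
      fix m' assume "m' < m"
      then have "\<not> (m' < length ps \<and> improving w xs (ps ! m'))" unfolding m_def by (rule not_less_Least)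
      then show "\<not> improving w xs (ps ! m')" using \<open>m' < m\<close> mP by auto
    qed
    obtain i j where ij: "ps ! m = (i, j)" by (cases "ps ! m")
    have "(i, j) \<in> set ps" using mP ij by (metis nth_mem)
    then have ijp: "i < j \<and> j < length xs \<and> (cyc \<or> Suc j < length xs)" unfolding ps_def by (rule scan_mem)
    define xs' where "xs' = two_opt_swap xs (i, j)"
    have dec: "tw w cyc xs' < tw w cyc xs" unfolding xs'_def
      by (rule swap_dec[OF sym]) (use ijp mP ij in auto)
    have len: "length xs' = n" using swap_props(1)[of i j xs] ijp less.prems by (simp add: xs'_def)
    obtain c' where c': "two_opt_cost w cyc xs' c'" "c' \<le> (tw w cyc xs' + 1) * (L + 2)"
      using less.hyps[OF dec len] L_def by auto
    have "two_opt_cost w cyc xs (Suc m + 1 + c')"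
      by (rule two_opt_cost.step[OF ps_def]) (use mP mL c' ij xs'_def in auto)
    moreover have "(tw w cyc xs' + 1) * (L + 2) \<le> tw w cyc xs * (L + 2)"
      using dec by (intro mult_right_mono) auto
    ultimately show ?thesis using c' mP Lps L_def
      by (intro exI[of _ "Suc m + 1 + c'"]) (auto simp: algebra_simps)
  qed
qed

lemma relpowp_sym: "\<forall>u v. E u v \<longrightarrow> E v u \<Longrightarrow> (E ^^ k) u v \<Longrightarrow> (E ^^ k) v u"
proof (induction k arbitrary: u v)
  case (Suc k)
  from Suc.prems(2) obtain y where y: "(E ^^ k) u y" "E y v" by (rule relpowp_Suc_E)
  have "E v y" using y Suc.prems(1) by blast
  moreover have "(E ^^ k) y u" using Suc.IH[OF Suc.prems(1) y(1)] .
  ultimately show ?case by (rule relpowp_Suc_I2)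
qed simp

lemma relpowp_path: "(E ^^ k) u v \<Longrightarrow> \<exists>xs. rtrancl_path E u xs v \<and> length xs = k"
proof (induction k arbitrary: u)
  case 0 then show ?case by (auto intro: rtrancl_path.base)
next
  case (Suc k)
  from Suc.prems obtain y where y: "E u y" "(E ^^ k) y v" by (rule relpowp_Suc_E2)
  then obtain xs where "rtrancl_path E y xs v" "length xs = k" using Suc.IH by blast
  then show ?case using y by (auto intro!: exI[of _ "y # xs"] rtrancl_path.step)
qed

lemma path_relpowp: "rtrancl_path E u xs v \<Longrightarrow> (E ^^ length xs) u v"
proof (induction rule: rtrancl_path.induct)
  case (step x y ys z)
  then show ?case using relpowp_Suc_I2[of E x y "length ys" z] by simp
qed simp

lemma path_set: "rtrancl_path E u xs v \<Longrightarrow> \<forall>a b. E a b \<longrightarrow> b < n \<Longrightarrow> set xs \<subseteq> {..<n}"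
  by (induction rule: rtrancl_path.induct) auto

lemma dist_sym: "graph_ok n E \<Longrightarrow> dist E u v = dist E v u"
  unfolding dist_def graph_ok_def
  by (metis relpowp_sym)

lemma dist_le: assumes "graph_ok n E" "connected n E" "u < n" "v < n" shows "dist E u v \<le> n"
proof -
  obtain k where "(E ^^ k) u v" using assms unfolding connected_def by blast
  then obtain xs where "rtrancl_path E u xs v" using relpowp_path by metis
  then obtain xs' where p: "rtrancl_path E u xs' v" "distinct (u # xs')" by (rule rtrancl_path_distinct)
  have "set xs' \<subseteq> {..<n}" using path_set[OF p(1)] assms(1) unfolding graph_ok_def by blast
  then have "set (u # xs') \<subseteq> {..<n}" using assms by auto
  then have "length (u # xs') \<le> n" using p(2)
    by (metis card_lessThan card_mono distinct_card finite_lessThan)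
  moreover have "dist E u v \<le> length xs'" unfolding dist_def
    using path_relpowp[OF p(1)] by (rule Least_le)
  ultimately show ?thesis by simp
qed

lemma poly_bound: "0 < (n::nat) \<Longrightarrow> n + (n * n + n + 1) * (n * n + 2) \<le> 10 * n ^ 4"
proof -
  assume "0 < n"
  then have "1 \<le> n" by simp
  then have a1: "n ^ 1 \<le> n ^ 4" "n ^ 2 \<le> n ^ 4" "n ^ 3 \<le> n ^ 4" "n ^ 0 \<le> n ^ 4"
    by (intro power_increasing; simp)+
  then have a: "n \<le> n ^ 4" "n ^ 2 \<le> n ^ 4" "n ^ 3 \<le> n ^ 4" "1 \<le> n ^ 4" by simp_all
  have "n + (n * n + n + 1) * (n * n + 2) = n ^ 4 + n ^ 3 + 3 * n ^ 2 + 3 * n + 2"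
    by (simp add: algebra_simps power2_eq_square power3_eq_cube power4_eq_xxxx)
  then show ?thesis using a by linarith
qed

lemma cost_bound:
  assumes g: "graph_ok n E" "connected n E" and n: "0 < n"
    and xs: "length xs = n" "set xs \<subseteq> {..<n}"
  shows "\<exists>c. two_opt_cost (dist E) cyc xs c \<and> n + c \<le> 10 * n ^ 4"
proof -
  have sym: "\<forall>a b. dist E a b = dist E b a" using dist_sym[OF g(1)] by blast
  have bnd: "\<forall>a b. a < n \<longrightarrow> b < n \<longrightarrow> dist E a b \<le> n" using dist_le[OF g] by blast
  obtain c where c: "two_opt_cost (dist E) cyc xs c"
     "c \<le> (tw (dist E) cyc xs + 1) * (length (scan_pairs cyc n) + 2)"
    using cost_exists[OF sym xs(1)] by blast
  have "pw (dist E) xs \<le> n * n" using pw_bound[OF xs(2) bnd] xs(1) by simp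
  moreover have "xs \<noteq> [] \<Longrightarrow> dist E (last xs) (hd xs) \<le> n"
  proof -
    assume ne: "xs \<noteq> []"
    have "last xs < n" "hd xs < n" using xs(2) last_in_set[OF ne] hd_in_set[OF ne] by auto
    then show ?thesis using bnd by blast
  qed
  ultimately have "tw (dist E) cyc xs \<le> n * n + n" by (auto simp: tw_def)
  then have "c \<le> (n * n + n + 1) * (n * n + 2)"
  proof -
    have "length (scan_pairs cyc n) + 2 \<le> n * n + 2" using scan_len[of cyc n] by simp
    moreover have "tw (dist E) cyc xs + 1 \<le> n * n + n + 1" using \<open>tw (dist E) cyc xs \<le> n * n + n\<close> by simp
    ultimately have "(tw (dist E) cyc xs + 1) * (length (scan_pairs cyc n) + 2) \<le> (n * n + n + 1) * (n * n + 2)"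
      by (intro mult_le_mono)
    then show ?thesis using c(2) by (rule le_trans[rotated])
  qed
  then show ?thesis using c(1) poly_bound[OF n] by (intro exI[of _ c]) auto
qed

lemma init_path_props: "s < n \<Longrightarrow> length (init_path n s) = n \<and> set (init_path n s) \<subseteq> {..<n}"
proof -
  assume s: "s < n"
  have d: "distinct (init_path n s)" by (simp add: init_path_def)
  have st: "set (init_path n s) = {..<n}" using s by (auto simp: init_path_def)
  show ?thesis using distinct_card[OF d] st by simp
qed

theorem theorem2:
  "\<exists>C :: nat. \<forall>n E. graph_ok n E \<and> connected n E \<longrightarrow>
     (\<exists>c. two_opt_cost (dist E) True (init_cycle n) c \<and> n + c \<le> C * n ^ 4) \<and>
     (\<forall>s < n. \<exists>c. two_opt_cost (dist E) False (init_path n s) c \<and> n + c \<le> C * n ^ 4) \<and>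
     (\<exists>cs :: nat \<Rightarrow> nat. (\<forall>s < n. two_opt_cost (dist E) False (init_path n s) (cs s)) \<and>
        (\<Sum>s<n. n + cs s) \<le> C * n ^ 5)"
proof (intro exI[of _ 10] allI impI)
  fix n E assume g: "graph_ok n E \<and> connected n E"
  show "(\<exists>c. two_opt_cost (dist E) True (init_cycle n) c \<and> n + c \<le> 10 * n ^ 4) \<and>
     (\<forall>s < n. \<exists>c. two_opt_cost (dist E) False (init_path n s) c \<and> n + c \<le> 10 * n ^ 4) \<and>
     (\<exists>cs :: nat \<Rightarrow> nat. (\<forall>s < n. two_opt_cost (dist E) False (init_path n s) (cs s)) \<and>
        (\<Sum>s<n. n + cs s) \<le> 10 * n ^ 5)"
  proof (cases "n = 0")
    case True
    have "two_opt_cost (dist E) True [] 0"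
      using two_opt_cost.stop[of True "[]" "dist E"] by (simp add: scan_pairs_def)
    then show ?thesis using True by (auto simp: init_cycle_def)
  next
    case False
    then have n: "0 < n" by simp
    have P1: "\<exists>c. two_opt_cost (dist E) True (init_cycle n) c \<and> n + c \<le> 10 * n ^ 4"
      using g n by (intro cost_bound) (auto simp: init_cycle_def)
    have P2: "\<forall>s < n. \<exists>c. two_opt_cost (dist E) False (init_path n s) c \<and> n + c \<le> 10 * n ^ 4"
    proof (intro allI impI)
      fix s assume "s < n"
      then show "\<exists>c. two_opt_cost (dist E) False (init_path n s) c \<and> n + c \<le> 10 * n ^ 4"
        using g n init_path_props[of s n] by (intro cost_bound) auto
    qed
    define cs where "cs s = (SOME c. two_opt_cost (dist E) False (init_path n s) c \<and> n + c \<le> 10 * n ^ 4)" for s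
    have cs: "two_opt_cost (dist E) False (init_path n s) (cs s) \<and> n + cs s \<le> 10 * n ^ 4" if "s < n" for s
    proof -
      have "\<exists>c. two_opt_cost (dist E) False (init_path n s) c \<and> n + c \<le> 10 * n ^ 4" using P2 that by blast
      then show ?thesis unfolding cs_def by (rule someI_ex)
    qed
    have "(\<Sum>s<n. n + cs s) \<le> card {..<n} * (10 * n ^ 4)"
      using sum_bounded_above[of "{..<n}" "\<lambda>s. n + cs s" "10 * n ^ 4"] cs by auto
    also have "\<dots> = 10 * n ^ 5"
    proof -
      have "n ^ 5 = n * n ^ 4" by (simp add: numeral_eq_Suc)
      then show ?thesis by simp
    qed
    finally have "(\<Sum>s<n. n + cs s) \<le> 10 * n ^ 5" .
    then show ?thesis using P1 P2 cs by (intro conjI exI[of _ cs]) auto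
  qed
qed

end
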